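(* Let $H$ be a finitely realizable hypergroup and $N$ a normal sub-hypergroup of $H$. Then the quotient hypergroup $H/N$ is finitely realizable.
   Context: A hypergroup is a nonempty set $H$ with $*:H\times H\to P^*(H)$ (nonempty subsets), extended to subsets by $A*B=\bigcup_{a\in A,b\in B}a*b$, which is associative, has a unique identity $e$, unique inverses $h^{-1}$ with $e\in(h^{-1}*h)\cap(h*h^{-1})$, and is reversible ($c\in a*b\Rightarrow a\in c*b^{-1},\ b\in a^{-1}*c$). A sub-hypergroup $N$ is normal if $hN=Nh$ for all $h\in H$ (where $hN=\{h\}*N$). The quotient $H/N$ is the hypergroup on the set of cosets $\{hN:h\in H\}$ with $(aN)(bN)=\{cN: c\in aN*bN\}$. For a nonempty set $X$: $1_X$ is the diagonal, $p^*=\{(a,b):(b,a)\in p\}$, $xp=\{y:(x,y)\in p\}$. An association scheme on $X$ is a partition $S$ of $X\times X$ with $1_X\in S$, closed under $p\mapsto p^*$, such that for all $p,q,r\in S$ there is a cardinal $a_{pq}^r$ with $|yp\cap zq^*|=a_{pq}^r$ for all $y\in X$, $z\in yr$. $\mathbf{H}(S)$ is the hypergroup on $S$ with $p*q=\{r: a_{pq}^r\ge1\}$, identity $1_X$, inverse $p^*$. A hypergroup is finitely realizable if it is isomorphic to $\mathbf{H}(S)$ for some association scheme $S$ on a finite set $X$. *)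

theory Defs
  imports Main
begin

definition set_mult :: "('a \<Rightarrow> 'a \<Rightarrow> 'a set) \<Rightarrow> 'a set \<Rightarrow> 'a set \<Rightarrow> 'a set" where
  "set_mult m A B = (\<Union>a\<in>A. \<Union>b\<in>B. m a b)"

definition hypergroup ::
  "'a set \<Rightarrow> ('a \<Rightarrow> 'a \<Rightarrow> 'a set) \<Rightarrow> 'a \<Rightarrow> ('a \<Rightarrow> 'a) \<Rightarrow> bool" where
  "hypergroup H m e iv \<longleftrightarrow>
     H \<noteq> {} \<and>
     (\<forall>a\<in>H. \<forall>b\<in>H. m a b \<subseteq> H \<and> m a b \<noteq> {}) \<and>
     (\<forall>a\<in>H. \<forall>b\<in>H. \<forall>c\<in>H. set_mult m (m a b) {c} = set_mult m {a} (m b c)) \<and>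
     e \<in> H \<and> (\<forall>h\<in>H. m e h = {h} \<and> m h e = {h}) \<and>
     (\<forall>e'\<in>H. (\<forall>h\<in>H. m e' h = {h} \<and> m h e' = {h}) \<longrightarrow> e' = e) \<and>
     (\<forall>h\<in>H. iv h \<in> H \<and> e \<in> m (iv h) h \<inter> m h (iv h)) \<and>
     (\<forall>h\<in>H. \<forall>k\<in>H. e \<in> m k h \<inter> m h k \<longrightarrow> k = iv h) \<and>
     (\<forall>a\<in>H. \<forall>b\<in>H. \<forall>c\<in>H. c \<in> m a b \<longrightarrow> a \<in> m c (iv b) \<and> b \<in> m (iv a) c)"

definition sub_hypergroup ::
  "'a set \<Rightarrow> ('a \<Rightarrow> 'a \<Rightarrow> 'a set) \<Rightarrow> ('a \<Rightarrow> 'a) \<Rightarrow> 'a set \<Rightarrow> bool" where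
  "sub_hypergroup H m iv N \<longleftrightarrow>
     N \<subseteq> H \<and> N \<noteq> {} \<and> (\<forall>a\<in>N. \<forall>b\<in>N. m a b \<subseteq> N) \<and> (\<forall>a\<in>N. iv a \<in> N)"

definition normal_sub_hypergroup ::
  "'a set \<Rightarrow> ('a \<Rightarrow> 'a \<Rightarrow> 'a set) \<Rightarrow> ('a \<Rightarrow> 'a) \<Rightarrow> 'a set \<Rightarrow> bool" where
  "normal_sub_hypergroup H m iv N \<longleftrightarrow>
     sub_hypergroup H m iv N \<and> (\<forall>h\<in>H. set_mult m {h} N = set_mult m N {h})"

definition quot_carrier :: "'a set \<Rightarrow> ('a \<Rightarrow> 'a \<Rightarrow> 'a set) \<Rightarrow> 'a set \<Rightarrow> 'a set set" where
  "quot_carrier H m N = {set_mult m {h} N | h. h \<in> H}"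

definition quot_mult :: "('a \<Rightarrow> 'a \<Rightarrow> 'a set) \<Rightarrow> 'a set \<Rightarrow> 'a set \<Rightarrow> 'a set \<Rightarrow> 'a set set" where
  "quot_mult m N A B = {set_mult m {c} N | c. c \<in> set_mult m A B}"

text \<open>Association schemes on a finite set X (finite sets are represented inside nat).\<close>
definition assoc_scheme :: "'x set \<Rightarrow> ('x \<times> 'x) set set \<Rightarrow> bool" where
  "assoc_scheme X S \<longleftrightarrow>
     {} \<notin> S \<and> \<Union>S = X \<times> X \<and> (\<forall>p\<in>S. \<forall>q\<in>S. p \<noteq> q \<longrightarrow> p \<inter> q = {}) \<and>
     Id_on X \<in> S \<and> (\<forall>p\<in>S. converse p \<in> S) \<and>
     (\<forall>p\<in>S. \<forall>q\<in>S. \<forall>r\<in>S. \<exists>a::nat. \<forall>y\<in>X. \<forall>z. (y, z) \<in> r \<longrightarrow>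
         card ({w. (y, w) \<in> p} \<inter> {w. (z, w) \<in> converse q}) = a)"

definition int_number :: "'x set \<Rightarrow> ('x \<times> 'x) set \<Rightarrow> ('x \<times> 'x) set \<Rightarrow> ('x \<times> 'x) set \<Rightarrow> nat" where
  "int_number X p q r = (THE a. \<forall>y\<in>X. \<forall>z. (y, z) \<in> r \<longrightarrow>
         card ({w. (y, w) \<in> p} \<inter> {w. (z, w) \<in> converse q}) = a)"

definition scheme_mult :: "'x set \<Rightarrow> ('x \<times> 'x) set set \<Rightarrow> ('x \<times> 'x) set \<Rightarrow> ('x \<times> 'x) set \<Rightarrow> ('x \<times> 'x) set set" where
  "scheme_mult X S p q = {r\<in>S. int_number X p q r \<ge> 1}"

definition hg_iso :: "'a set \<Rightarrow> ('a \<Rightarrow> 'a \<Rightarrow> 'a set) \<Rightarrow> 'b set \<Rightarrow> ('b \<Rightarrow> 'b \<Rightarrow> 'b set) \<Rightarrow> ('a \<Rightarrow> 'b) \<Rightarrow> bool" where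
  "hg_iso H m K m' f \<longleftrightarrow> bij_betw f H K \<and> (\<forall>a\<in>H. \<forall>b\<in>H. f ` (m a b) = m' (f a) (f b))"

definition finitely_realizable :: "'a set \<Rightarrow> ('a \<Rightarrow> 'a \<Rightarrow> 'a set) \<Rightarrow> bool" where
  "finitely_realizable H m \<longleftrightarrow>
     (\<exists>(X::nat set) S f. finite X \<and> X \<noteq> {} \<and> assoc_scheme X S \<and> hg_iso H m S (scheme_mult X S) f)"

end

theory Submission
  imports Defs
begin


lemma sm_mem: "x \<in> set_mult m A B \<longleftrightarrow> (\<exists>a\<in>A. \<exists>b\<in>B. x \<in> m a b)"
  by (auto simp: set_mult_def)

lemma sm_mono: "A \<subseteq> A' \<Longrightarrow> B \<subseteq> B' \<Longrightarrow> set_mult m A B \<subseteq> set_mult m A' B'"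
  by (auto simp: set_mult_def)

lemma sm_single: "set_mult m {a} {b} = m a b"
  by (auto simp: set_mult_def)

locale HG =
  fixes H m e iv N
  assumes hg: "hypergroup H m e iv" and nm: "normal_sub_hypergroup H m iv N"
begin

abbreviation sm where "sm \<equiv> set_mult m"

lemma closed: "a \<in> H \<Longrightarrow> b \<in> H \<Longrightarrow> m a b \<subseteq> H" using hg by (auto simp: hypergroup_def)
lemma nonempty: "a \<in> H \<Longrightarrow> b \<in> H \<Longrightarrow> m a b \<noteq> {}" using hg by (auto simp: hypergroup_def)
lemma assoc1: "a \<in> H \<Longrightarrow> b \<in> H \<Longrightarrow> c \<in> H \<Longrightarrow> sm (m a b) {c} = sm {a} (m b c)"
  using hg by (auto simp: hypergroup_def)
lemma eH: "e \<in> H" using hg by (auto simp: hypergroup_def)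
lemma eid: "h \<in> H \<Longrightarrow> m e h = {h} \<and> m h e = {h}" using hg by (auto simp: hypergroup_def)
lemma hg_eu: "\<forall>e'\<in>H. (\<forall>h\<in>H. m e' h = {h} \<and> m h e' = {h}) \<longrightarrow> e' = e"
  using hg unfolding hypergroup_def by (elim conjE) assumption
lemma hg_ivu: "\<forall>h\<in>H. \<forall>k\<in>H. e \<in> m k h \<inter> m h k \<longrightarrow> k = iv h"
  using hg unfolding hypergroup_def by (elim conjE) assumption
lemma hg_rev: "\<forall>a\<in>H. \<forall>b\<in>H. \<forall>c\<in>H. c \<in> m a b \<longrightarrow> a \<in> m c (iv b) \<and> b \<in> m (iv a) c"
  using hg unfolding hypergroup_def by (elim conjE) assumption
lemma eu: "e' \<in> H \<Longrightarrow> (\<And>h. h \<in> H \<Longrightarrow> m e' h = {h} \<and> m h e' = {h}) \<Longrightarrow> e' = e"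
  using hg_eu by blast
lemma ivH: "h \<in> H \<Longrightarrow> iv h \<in> H" using hg by (auto simp: hypergroup_def)
lemma ive: "h \<in> H \<Longrightarrow> e \<in> m (iv h) h \<and> e \<in> m h (iv h)" using hg by (auto simp: hypergroup_def)
lemma ivu: "h \<in> H \<Longrightarrow> k \<in> H \<Longrightarrow> e \<in> m k h \<Longrightarrow> e \<in> m h k \<Longrightarrow> k = iv h"
  using hg_ivu by blast
lemma rev: "a \<in> H \<Longrightarrow> b \<in> H \<Longrightarrow> c \<in> H \<Longrightarrow> c \<in> m a b \<Longrightarrow> a \<in> m c (iv b) \<and> b \<in> m (iv a) c"
  using hg_rev by blast

lemma iviv: "h \<in> H \<Longrightarrow> iv (iv h) = h"
  using ivu[of "iv h" h] ive[of h] ivH[of h] by auto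

lemma NH: "N \<subseteq> H" using nm by (auto simp: normal_sub_hypergroup_def sub_hypergroup_def)
lemma Nne: "N \<noteq> {}" using nm by (auto simp: normal_sub_hypergroup_def sub_hypergroup_def)
lemma Nmul: "a \<in> N \<Longrightarrow> b \<in> N \<Longrightarrow> m a b \<subseteq> N" using nm by (auto simp: normal_sub_hypergroup_def sub_hypergroup_def)
lemma Niv: "a \<in> N \<Longrightarrow> iv a \<in> N" using nm by (auto simp: normal_sub_hypergroup_def sub_hypergroup_def)
lemma Nnorm: "h \<in> H \<Longrightarrow> sm {h} N = sm N {h}" using nm by (auto simp: normal_sub_hypergroup_def)

lemma eN: "e \<in> N"
proof -
  obtain n where n: "n \<in> N" using Nne by auto
  then show ?thesis using Nmul[of n "iv n"] Niv[of n] ive[of n] NH by auto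
qed

lemma smH: "A \<subseteq> H \<Longrightarrow> B \<subseteq> H \<Longrightarrow> sm A B \<subseteq> H"
  unfolding set_mult_def using closed by blast

lemma sm_assoc: "A \<subseteq> H \<Longrightarrow> B \<subseteq> H \<Longrightarrow> C \<subseteq> H \<Longrightarrow> sm (sm A B) C = sm A (sm B C)"
proof -
  assume A: "A \<subseteq> H" and B: "B \<subseteq> H" and C: "C \<subseteq> H"
  have *: "\<And>a b c x. a \<in> A \<Longrightarrow> b \<in> B \<Longrightarrow> c \<in> C \<Longrightarrow> (\<exists>d\<in>m a b. x \<in> m d c) \<longleftrightarrow> (\<exists>d\<in>m b c. x \<in> m a d)"
  proof -
    fix a b c x assume "a \<in> A" "b \<in> B" "c \<in> C"
    then have "sm (m a b) {c} = sm {a} (m b c)" using A B C by (intro assoc1) auto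
    then have "x \<in> sm (m a b) {c} \<longleftrightarrow> x \<in> sm {a} (m b c)" by simp
    then show "(\<exists>d\<in>m a b. x \<in> m d c) \<longleftrightarrow> (\<exists>d\<in>m b c. x \<in> m a d)" by (auto simp: sm_mem)
  qed
  show ?thesis
  proof (rule set_eqI)
    fix x
    have l: "x \<in> sm (sm A B) C \<longleftrightarrow> (\<exists>a\<in>A. \<exists>b\<in>B. \<exists>c\<in>C. \<exists>d\<in>m a b. x \<in> m d c)"
      by (auto simp: set_mult_def)
    have r: "x \<in> sm A (sm B C) \<longleftrightarrow> (\<exists>a\<in>A. \<exists>b\<in>B. \<exists>c\<in>C. \<exists>d\<in>m b c. x \<in> m a d)"
      by (auto simp: set_mult_def)
    show "x \<in> sm (sm A B) C \<longleftrightarrow> x \<in> sm A (sm B C)"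
      unfolding l r using * by blast
  qed
qed

lemma NN: "sm N N \<subseteq> N" unfolding set_mult_def using Nmul by blast

lemma in_coset: "h \<in> H \<Longrightarrow> h \<in> sm {h} N"
  using eid[of h] eN by (auto simp: sm_mem)

lemma coset_H: "h \<in> H \<Longrightarrow> sm {h} N \<subseteq> H" using smH NH by auto

lemma cosetN: "h \<in> H \<Longrightarrow> sm (sm {h} N) N \<subseteq> sm {h} N"
  using sm_assoc[of "{h}" N N] NH NN sm_mono[of "{h}" "{h}" "sm N N" N m] by auto

lemma coset_eq: "h \<in> H \<Longrightarrow> c \<in> sm {h} N \<Longrightarrow> sm {c} N = sm {h} N"
proof -
  assume h: "h \<in> H" and c: "c \<in> sm {h} N"
  then obtain n where n: "n \<in> N" "c \<in> m h n" by (auto simp: sm_mem)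
  have cH: "c \<in> H" using c coset_H h by auto
  have "sm {c} N \<subseteq> sm (sm {h} N) N" using c by (intro sm_mono) auto
  also have "\<dots> \<subseteq> sm {h} N" using cosetN h .
  finally have 1: "sm {c} N \<subseteq> sm {h} N" .
  have "h \<in> m c (iv n)" using rev[of h n c] n h cH NH by auto
  then have "h \<in> sm {c} N" using Niv n by (auto simp: sm_mem)
  then have "sm {h} N \<subseteq> sm (sm {c} N) N" by (intro sm_mono) auto
  also have "\<dots> \<subseteq> sm {c} N" using cosetN cH .
  finally show ?thesis using 1 by auto
qed

lemma coset_left: "h \<in> H \<Longrightarrow> sm N (sm {h} N) \<subseteq> sm {h} N"
proof -
  assume h: "h \<in> H"
  have "sm N (sm {h} N) = sm (sm N {h}) N" using sm_assoc[of N "{h}" N] NH h by auto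
  also have "\<dots> = sm (sm {h} N) N" using Nnorm h by simp
  also have "\<dots> \<subseteq> sm {h} N" using cosetN h .
  finally show ?thesis .
qed

lemma coset_closed_r: "h \<in> H \<Longrightarrow> a \<in> sm {h} N \<Longrightarrow> n \<in> N \<Longrightarrow> m a n \<subseteq> sm {h} N"
proof -
  assume h: "h \<in> H" and a: "a \<in> sm {h} N" and n: "n \<in> N"
  have "m a n \<subseteq> sm (sm {h} N) N" using a n unfolding set_mult_def by blast
  then show ?thesis using cosetN[OF h] by blast
qed

lemma coset_closed_l: "h \<in> H \<Longrightarrow> a \<in> sm {h} N \<Longrightarrow> n \<in> N \<Longrightarrow> m n a \<subseteq> sm {h} N"
proof -
  assume h: "h \<in> H" and a: "a \<in> sm {h} N" and n: "n \<in> N"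
  have "m n a \<subseteq> sm N (sm {h} N)" using a n unfolding set_mult_def by blast
  then show ?thesis using coset_left[OF h] by blast
qed

end


locale QS = HG H m e iv N for H :: "'a set" and m e iv N +
  fixes X :: "nat set" and S and f :: "'a \<Rightarrow> (nat \<times> nat) set"
  assumes finX: "finite X" and Xne: "X \<noteq> {}" and sch: "assoc_scheme X S"
    and iso: "hg_iso H m S (scheme_mult X S) f"
begin

lemma S_sub: "p \<in> S \<Longrightarrow> p \<subseteq> X \<times> X" using sch by (auto simp: assoc_scheme_def)
lemma S_ne: "p \<in> S \<Longrightarrow> p \<noteq> {}" using sch by (auto simp: assoc_scheme_def)
lemma sch_disj: "\<forall>p\<in>S. \<forall>q\<in>S. p \<noteq> q \<longrightarrow> p \<inter> q = {}"
  using sch unfolding assoc_scheme_def by (elim conjE) assumption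
lemma sch_cov: "\<Union>S = X \<times> X"
  using sch unfolding assoc_scheme_def by (elim conjE) assumption
lemma sch_const: "\<forall>p\<in>S. \<forall>q\<in>S. \<forall>r\<in>S. \<exists>a::nat. \<forall>y\<in>X. \<forall>z. (y, z) \<in> r \<longrightarrow>
         card ({w. (y, w) \<in> p} \<inter> {w. (z, w) \<in> converse q}) = a"
  using sch unfolding assoc_scheme_def by (elim conjE) assumption
lemma S_disj: "p \<in> S \<Longrightarrow> q \<in> S \<Longrightarrow> x \<in> p \<Longrightarrow> x \<in> q \<Longrightarrow> p = q"
  using sch_disj by blast
lemma S_cover: "x \<in> X \<Longrightarrow> y \<in> X \<Longrightarrow> \<exists>p\<in>S. (x,y) \<in> p"
proof -
  assume "x \<in> X" "y \<in> X"
  then have "(x,y) \<in> \<Union>S" using sch_cov by simp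
  then show ?thesis by blast
qed
lemma IdS: "Id_on X \<in> S" using sch by (auto simp: assoc_scheme_def)

lemma int_number_eq:
  assumes p: "p \<in> S" and q: "q \<in> S" and r: "r \<in> S" and y: "y \<in> X" and yz: "(y,z) \<in> r"
  shows "int_number X p q r = card ({w. (y, w) \<in> p} \<inter> {w. (z, w) \<in> converse q})"
proof -
  obtain a :: nat where a: "\<forall>y\<in>X. \<forall>z. (y, z) \<in> r \<longrightarrow>
         card ({w. (y, w) \<in> p} \<inter> {w. (z, w) \<in> converse q}) = a"
    using sch_const p q r by blast
  have "int_number X p q r = a"
    unfolding int_number_def
  proof (rule the_equality)
    fix a' assume "\<forall>y\<in>X. \<forall>z. (y, z) \<in> r \<longrightarrow>
         card ({w. (y, w) \<in> p} \<inter> {w. (z, w) \<in> converse q}) = a'"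
    then show "a' = a" using a y yz by metis
  qed (use a in blast)
  then show ?thesis using a y yz by metis
qed

lemma bij: "bij_betw f H S" using iso by (auto simp: hg_iso_def)
lemma fprod: "a \<in> H \<Longrightarrow> b \<in> H \<Longrightarrow> f ` (m a b) = scheme_mult X S (f a) (f b)"
  using iso by (auto simp: hg_iso_def)
lemma fS: "h \<in> H \<Longrightarrow> f h \<in> S" by (rule bij_betw_apply[OF bij])
lemma finj: "h \<in> H \<Longrightarrow> k \<in> H \<Longrightarrow> f h = f k \<Longrightarrow> h = k"
  using bij unfolding bij_betw_def inj_on_def by blast
lemma fsurj: "p \<in> S \<Longrightarrow> \<exists>h\<in>H. f h = p"
  using bij unfolding bij_betw_def by blast

definition rho where "rho x y = (THE h. h \<in> H \<and> (x,y) \<in> f h)"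

lemma rho: assumes "x \<in> X" "y \<in> X" shows "rho x y \<in> H \<and> (x,y) \<in> f (rho x y)"
proof -
  obtain p where p: "p \<in> S" "(x,y) \<in> p" using S_cover assms by blast
  obtain h where h: "h \<in> H" "f h = p" using fsurj p by blast
  have "rho x y = h" unfolding rho_def
  proof (rule the_equality)
    show "h \<in> H \<and> (x, y) \<in> f h" using h p by auto
    fix k assume k: "k \<in> H \<and> (x, y) \<in> f k"
    then have "f k = f h" using S_disj[of "f k" "f h"] fS h p by auto
    then show "k = h" using finj k h by auto
  qed
  then show ?thesis using h p by auto
qed

lemma rho_eq: assumes "h \<in> H" "(x,y) \<in> f h" shows "rho x y = h"
proof -
  have xy: "x \<in> X" "y \<in> X" using S_sub fS assms by blast+
  have "f (rho x y) = f h" using S_disj[of "f (rho x y)" "f h"] fS assms rho[OF xy] by auto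
  then show ?thesis using finj rho[OF xy] assms by auto
qed

lemma pair_ex: "h \<in> H \<Longrightarrow> \<exists>x\<in>X. \<exists>y\<in>X. rho x y = h"
proof -
  assume h: "h \<in> H"
  then obtain x y where "(x,y) \<in> f h" using S_ne fS by fastforce
  then show ?thesis using rho_eq h S_sub fS by blast
qed

lemma cnt:
  assumes a: "a \<in> H" and b: "b \<in> H" and c: "c \<in> H" and x: "x \<in> X" and z: "z \<in> X" and xz: "rho x z = c"
  shows "int_number X (f a) (f b) (f c) = card {y\<in>X. rho x y = a \<and> rho y z = b}"
proof -
  have "(x,z) \<in> f c" using rho[OF x z] xz by auto
  then have "int_number X (f a) (f b) (f c) = card ({w. (x, w) \<in> f a} \<inter> {w. (z, w) \<in> converse (f b)})"
    using int_number_eq fS a b c x by blast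
  also have "{w. (x, w) \<in> f a} \<inter> {w. (z, w) \<in> converse (f b)} = {y\<in>X. rho x y = a \<and> rho y z = b}"
  proof (rule set_eqI, rule iffI)
    fix w assume "w \<in> {w. (x, w) \<in> f a} \<inter> {w. (z, w) \<in> converse (f b)}"
    then have 1: "(x,w) \<in> f a" "(w,z) \<in> f b" by auto
    then have "w \<in> X" using S_sub fS a by blast
    then show "w \<in> {y\<in>X. rho x y = a \<and> rho y z = b}" using rho_eq 1 a b by auto
  next
    fix w assume "w \<in> {y\<in>X. rho x y = a \<and> rho y z = b}"
    then show "w \<in> {w. (x, w) \<in> f a} \<inter> {w. (z, w) \<in> converse (f b)}"
      using rho x z by force
  qed
  finally show ?thesis .
qed

lemma finS: "finite {y\<in>X. P y}" using finX by auto

lemma rhoA: assumes x: "x \<in> X" and y: "y \<in> X" and z: "z \<in> X"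
  shows "rho x z \<in> m (rho x y) (rho y z)"
proof -
  let ?a = "rho x y" and ?b = "rho y z" and ?c = "rho x z"
  have H: "?a \<in> H" "?b \<in> H" "?c \<in> H" using rho x y z by auto
  have "card {w\<in>X. rho x w = ?a \<and> rho w z = ?b} \<ge> 1"
    using y finS[of "\<lambda>w. rho x w = ?a \<and> rho w z = ?b"]
    by (metis (mono_tags, lifting) One_nat_def Suc_leI card_gt_0_iff empty_iff mem_Collect_eq)
  then have "int_number X (f ?a) (f ?b) (f ?c) \<ge> 1" using cnt H x z by auto
  then have "f ?c \<in> scheme_mult X S (f ?a) (f ?b)" using fS H by (auto simp: scheme_mult_def)
  then have "f ?c \<in> f ` m ?a ?b" using fprod H by auto
  then obtain d where "d \<in> m ?a ?b" "f d = f ?c" by auto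
  then show ?thesis using finj closed H by (metis subsetD)
qed

lemma rhoB: assumes a: "a \<in> H" and b: "b \<in> H" and c: "c \<in> m a b" and x: "x \<in> X" and z: "z \<in> X"
  and xz: "rho x z = c"
  shows "\<exists>y\<in>X. rho x y = a \<and> rho y z = b"
proof -
  have cH: "c \<in> H" using closed a b c by auto
  have "f c \<in> scheme_mult X S (f a) (f b)" using fprod a b c by auto
  then have "int_number X (f a) (f b) (f c) \<ge> 1" by (auto simp: scheme_mult_def)
  then have "card {y\<in>X. rho x y = a \<and> rho y z = b} \<ge> 1" using cnt a b cH x z xz by auto
  then have "{y\<in>X. rho x y = a \<and> rho y z = b} \<noteq> {}"
    by (metis card.empty not_one_le_zero)
  then show ?thesis by blast
qed

lemma rhoC: assumes a: "a \<in> H" and b: "b \<in> H" and x: "x \<in> X" and z: "z \<in> X"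
  and x': "x' \<in> X" and z': "z' \<in> X" and eq: "rho x z = rho x' z'"
  shows "card {y\<in>X. rho x y = a \<and> rho y z = b} = card {y\<in>X. rho x' y = a \<and> rho y z' = b}"
proof -
  have h: "rho x z \<in> H" "rho x' z' \<in> H" using rho[OF x z] rho[OF x' z'] by blast+
  show ?thesis using cnt[OF a b h(1) x z refl] cnt[OF a b h(2) x' z' refl] eq by simp
qed

lemma rho_xx: assumes x: "x \<in> X" shows "rho x x = e"
proof -
  obtain i where i: "i \<in> H" "f i = Id_on X" using fsurj IdS by blast
  have ri: "\<And>u v. u \<in> X \<Longrightarrow> v \<in> X \<Longrightarrow> rho u v = i \<longleftrightarrow> u = v"
  proof -
    fix u v assume u: "u \<in> X" and v: "v \<in> X"
    show "rho u v = i \<longleftrightarrow> u = v"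
    proof
      assume "rho u v = i"
      then have "(u,v) \<in> Id_on X" using rho[OF u v] i by simp
      then show "u = v" by auto
    next
      assume "u = v"
      then have "(u,v) \<in> f i" using i u by auto
      then show "rho u v = i" using rho_eq i by blast
    qed
  qed
  have "i = e"
  proof (rule eu[OF i(1)])
    fix h assume h: "h \<in> H"
    obtain u v where uv: "u \<in> X" "v \<in> X" "rho u v = h" using pair_ex h by blast
    have 1: "m i h = {h}"
    proof
      show "{h} \<subseteq> m i h" using rhoA[of u u v] uv ri by auto
      show "m i h \<subseteq> {h}"
      proof
        fix c assume c: "c \<in> m i h"
        obtain p q where pq: "p \<in> X" "q \<in> X" "rho p q = c" using pair_ex c closed i h by blast
        obtain y where "y \<in> X" "rho p y = i" "rho y q = h" using rhoB[OF i(1) h c pq(1,2,3)] by blast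
        then show "c \<in> {h}" using ri pq by auto
      qed
    qed
    have 2: "m h i = {h}"
    proof
      show "{h} \<subseteq> m h i" using rhoA[of u v v] uv ri by auto
      show "m h i \<subseteq> {h}"
      proof
        fix c assume c: "c \<in> m h i"
        obtain p q where pq: "p \<in> X" "q \<in> X" "rho p q = c" using pair_ex c closed i h by blast
        obtain y where "y \<in> X" "rho p y = h" "rho y q = i" using rhoB[OF h i(1) c pq(1,2,3)] by blast
        then show "c \<in> {h}" using ri pq by auto
      qed
    qed
    show "m i h = {h} \<and> m h i = {h}" using 1 2 by auto
  qed
  then show ?thesis using ri x by auto
qed

lemma rho_sym: assumes x: "x \<in> X" and y: "y \<in> X" shows "rho y x = iv (rho x y)"
  using ivu[of "rho x y" "rho y x"] rhoA[OF x y x] rhoA[OF y x y] rho_xx x y rho by auto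

lemma iv_anti: assumes a: "a \<in> H" and b: "b \<in> H" and c: "c \<in> m a b"
  shows "iv c \<in> m (iv b) (iv a)"
proof -
  obtain x z where xz: "x \<in> X" "z \<in> X" "rho x z = c" using pair_ex c closed a b by blast
  obtain y where y: "y \<in> X" "rho x y = a" "rho y z = b" using rhoB[OF a b c xz] by blast
  have "rho z x \<in> m (rho z y) (rho y x)" using rhoA xz y by auto
  moreover have "rho z x = iv c" "rho z y = iv b" "rho y x = iv a"
    using rho_sym[OF xz(1,2)] rho_sym[OF xz(1) y(1)] rho_sym[OF y(1) xz(2)] xz y by simp_all
  ultimately show ?thesis by simp
qed

end


lemma int_number_gen:
  assumes a: "\<forall>y\<in>X. \<forall>z. (y, z) \<in> r \<longrightarrow> card ({w. (y, w) \<in> p} \<inter> {w. (z, w) \<in> converse q}) = a"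
    and y: "y \<in> X" and yz: "(y,z) \<in> r"
  shows "int_number X p q r = card ({w. (y, w) \<in> p} \<inter> {w. (z, w) \<in> converse q})"
proof -
  have "int_number X p q r = a"
    unfolding int_number_def
  proof (rule the_equality)
    fix a' assume "\<forall>y\<in>X. \<forall>z. (y, z) \<in> r \<longrightarrow>
         card ({w. (y, w) \<in> p} \<inter> {w. (z, w) \<in> converse q}) = a'"
    then show "a' = a" using a y yz by metis
  qed (use a in blast)
  then show ?thesis using a y yz by metis
qed

context QS begin

definition cls where "cls x = {y\<in>X. rho x y \<in> N}"
definition rep where "rep x = Min (cls x)"
definition X' where "X' = rep ` X"
definition QC where "QC = quot_carrier H m N"
definition g where "g A = {(u,v). u \<in> X' \<and> v \<in> X' \<and> rho u v \<in> A}"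
definition S' where "S' = g ` QC"

lemma E_refl: "x \<in> X \<Longrightarrow> rho x x \<in> N" using rho_xx eN by auto
lemma E_sym: "x \<in> X \<Longrightarrow> y \<in> X \<Longrightarrow> rho x y \<in> N \<Longrightarrow> rho y x \<in> N"
proof -
  assume x: "x \<in> X" and y: "y \<in> X" and n: "rho x y \<in> N"
  have "rho y x = iv (rho x y)" using rho_sym[OF x y] .
  then show ?thesis using Niv n by simp
qed
lemma E_trans: "x \<in> X \<Longrightarrow> y \<in> X \<Longrightarrow> z \<in> X \<Longrightarrow> rho x y \<in> N \<Longrightarrow> rho y z \<in> N \<Longrightarrow> rho x z \<in> N"
  using rhoA Nmul by blast

lemma cls_eq: assumes x: "x \<in> X" and y: "y \<in> X" and n: "rho x y \<in> N" shows "cls x = cls y"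
proof (rule set_eqI)
  fix w
  have "w \<in> X \<Longrightarrow> rho x w \<in> N \<Longrightarrow> rho y w \<in> N"
    using E_trans[OF y x _ E_sym[OF x y n]] by blast
  moreover have "w \<in> X \<Longrightarrow> rho y w \<in> N \<Longrightarrow> rho x w \<in> N"
    using E_trans[OF x y _ n] by blast
  ultimately show "w \<in> cls x \<longleftrightarrow> w \<in> cls y" unfolding cls_def by blast
qed

lemma cls_fin: "finite (cls x)" unfolding cls_def using finX by simp
lemma cls_self: "x \<in> X \<Longrightarrow> x \<in> cls x" unfolding cls_def using E_refl by simp

lemma rep_in: "x \<in> X \<Longrightarrow> rep x \<in> cls x"
proof -
  assume x: "x \<in> X"
  have "cls x \<noteq> {}" using cls_self[OF x] by blast
  then show ?thesis unfolding rep_def by (rule Min_in[OF cls_fin])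
qed

lemma rep_X: "x \<in> X \<Longrightarrow> rep x \<in> X" using rep_in unfolding cls_def by blast
lemma rep_E: "x \<in> X \<Longrightarrow> rho x (rep x) \<in> N" using rep_in unfolding cls_def by blast
lemma rep_E': "x \<in> X \<Longrightarrow> rho (rep x) x \<in> N"
proof -
  assume x: "x \<in> X"
  show ?thesis by (rule E_sym[OF x rep_X[OF x] rep_E[OF x]])
qed
lemma rep_eq: "x \<in> X \<Longrightarrow> y \<in> X \<Longrightarrow> rho x y \<in> N \<Longrightarrow> rep x = rep y"
proof -
  assume "x \<in> X" "y \<in> X" "rho x y \<in> N"
  then have "cls x = cls y" by (rule cls_eq)
  then show ?thesis unfolding rep_def by simp
qed

lemma X'_sub: "X' \<subseteq> X" unfolding X'_def using rep_X by blast
lemma rep_id: "u \<in> X' \<Longrightarrow> rep u = u"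
proof -
  assume "u \<in> X'"
  then obtain x where x: "x \<in> X" "u = rep x" unfolding X'_def by blast
  have "rep (rep x) = rep x"
    by (rule rep_eq[OF rep_X[OF x(1)] x(1) rep_E'[OF x(1)]])
  then show ?thesis using x by simp
qed
lemma X'_E: "u \<in> X' \<Longrightarrow> v \<in> X' \<Longrightarrow> rho u v \<in> N \<Longrightarrow> u = v"
proof -
  assume u: "u \<in> X'" and v: "v \<in> X'" and n: "rho u v \<in> N"
  have "rep u = rep v" using rep_eq[OF _ _ n] u v X'_sub by blast
  then show ?thesis using rep_id u v by simp
qed

lemma QC_D: "A \<in> QC \<Longrightarrow> \<exists>h\<in>H. A = sm {h} N" unfolding QC_def quot_carrier_def by blast
lemma QC_I: "h \<in> H \<Longrightarrow> sm {h} N \<in> QC" unfolding QC_def quot_carrier_def by blast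
lemma QC_H: "A \<in> QC \<Longrightarrow> A \<subseteq> H"
proof -
  assume "A \<in> QC" then obtain h where "h \<in> H" "A = sm {h} N" using QC_D by blast
  then show ?thesis using coset_H by simp
qed
lemma QC_of: "A \<in> QC \<Longrightarrow> a \<in> A \<Longrightarrow> A = sm {a} N"
proof -
  assume A: "A \<in> QC" and a: "a \<in> A"
  then obtain h where h: "h \<in> H" "A = sm {h} N" using QC_D by blast
  show ?thesis using coset_eq[OF h(1)] a h(2) by simp
qed
lemma QC_r: "A \<in> QC \<Longrightarrow> a \<in> A \<Longrightarrow> n \<in> N \<Longrightarrow> x \<in> m a n \<Longrightarrow> x \<in> A"
proof -
  assume A: "A \<in> QC" and a: "a \<in> A" and n: "n \<in> N" and x: "x \<in> m a n"
  then obtain h where h: "h \<in> H" "A = sm {h} N" using QC_D by blast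
  show ?thesis using coset_closed_r[OF h(1) _ n] a x h(2) by blast
qed
lemma QC_l: "A \<in> QC \<Longrightarrow> a \<in> A \<Longrightarrow> n \<in> N \<Longrightarrow> x \<in> m n a \<Longrightarrow> x \<in> A"
proof -
  assume A: "A \<in> QC" and a: "a \<in> A" and n: "n \<in> N" and x: "x \<in> m n a"
  then obtain h where h: "h \<in> H" "A = sm {h} N" using QC_D by blast
  show ?thesis using coset_closed_l[OF h(1) _ n] a x h(2) by blast
qed

lemma N_QC: "N \<in> QC"
proof -
  have "\<forall>b\<in>N. m e b = {b}" using eid NH by blast
  then have "sm {e} N = N" unfolding set_mult_def by auto
  then show ?thesis using QC_I[OF eH] by simp
qed

lemma W1: "A \<in> QC \<Longrightarrow> x \<in> X \<Longrightarrow> y \<in> X \<Longrightarrow> y' \<in> X \<Longrightarrow> rho x y \<in> A \<Longrightarrow> rho y y' \<in> N \<Longrightarrow> rho x y' \<in> A"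
  using rhoA QC_r by blast
lemma W2: "A \<in> QC \<Longrightarrow> x \<in> X \<Longrightarrow> y \<in> X \<Longrightarrow> x' \<in> X \<Longrightarrow> rho x y \<in> A \<Longrightarrow> rho x' x \<in> N \<Longrightarrow> rho x' y \<in> A"
  using rhoA QC_l by blast

lemma finS0: "finite S"
proof -
  have "S \<subseteq> Pow (X \<times> X)" using S_sub by auto
  then show ?thesis using finX finite_subset by blast
qed
lemma finH: "finite H" using bij_betw_finite bij finS0 by blast

definition D where "D A B x y = card {w\<in>X. rho x w \<in> A \<and> rho w y \<in> B}"
definition D' where "D' A B x y = card {w\<in>X'. rho x w \<in> A \<and> rho w y \<in> B}"

lemma D_sum: assumes A: "A \<subseteq> H" and B: "B \<subseteq> H"
  shows "D A B x y = (\<Sum>ab\<in>A\<times>B. card {w\<in>X. rho x w = fst ab \<and> rho w y = snd ab})"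
proof -
  have "{w\<in>X. rho x w \<in> A \<and> rho w y \<in> B} = (\<Union>ab\<in>A\<times>B. {w\<in>X. rho x w = fst ab \<and> rho w y = snd ab})"
    by auto
  moreover have "finite (A \<times> B)" using A B finH finite_subset by blast
  moreover have "card (\<Union>ab\<in>A\<times>B. {w\<in>X. rho x w = fst ab \<and> rho w y = snd ab})
      = (\<Sum>ab\<in>A\<times>B. card {w\<in>X. rho x w = fst ab \<and> rho w y = snd ab})"
    by (rule card_UN_disjoint) (use \<open>finite (A \<times> B)\<close> finX in auto)
  ultimately show ?thesis unfolding D_def by simp
qed

lemma D1: assumes A: "A \<subseteq> H" and B: "B \<subseteq> H" and x: "x \<in> X" and y: "y \<in> X"
  and x': "x' \<in> X" and y': "y' \<in> X" and eq: "rho x y = rho x' y'"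
  shows "D A B x y = D A B x' y'"
  unfolding D_sum[OF A B]
proof (rule sum.cong[OF refl])
  fix ab assume "ab \<in> A \<times> B"
  then have "fst ab \<in> H" "snd ab \<in> H" using A B by auto
  then show "card {w\<in>X. rho x w = fst ab \<and> rho w y = snd ab} = card {w\<in>X. rho x' w = fst ab \<and> rho w y' = snd ab}"
    by (rule rhoC[OF _ _ x y x' y' eq])
qed

lemma D2: assumes B: "B \<in> QC" and y: "y \<in> X" and y': "y' \<in> X" and yy: "rho y y' \<in> N"
  shows "D A B x y = D A B x y'"
proof -
  have "{w\<in>X. rho x w \<in> A \<and> rho w y \<in> B} = {w\<in>X. rho x w \<in> A \<and> rho w y' \<in> B}"
    using W1[OF B _ y y' _ yy] W1[OF B _ y' y _ E_sym[OF y y' yy]] by blast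
  then show ?thesis unfolding D_def by simp
qed

lemma D3: assumes A: "A \<in> QC" and B: "B \<in> QC" and C: "C \<in> QC"
  and x: "x \<in> X" and y: "y \<in> X" and x': "x' \<in> X" and y': "y' \<in> X"
  and c: "rho x y \<in> C" and c': "rho x' y' \<in> C"
  shows "D A B x y = D A B x' y'"
proof -
  let ?c = "rho x y" and ?c' = "rho x' y'"
  have cH: "?c \<in> H" "?c' \<in> H" using rho x y x' y' by auto
  have "C = sm {?c} N" using QC_of C c by auto
  then have "?c' \<in> sm {?c} N" using c' by auto
  then obtain n where n: "n \<in> N" "?c' \<in> m ?c n" by (auto simp: sm_mem)
  have "?c \<in> m ?c' (iv n)" using rev[of ?c n ?c'] n cH NH by auto
  then obtain y'' where y'': "y'' \<in> X" "rho x y'' = ?c'" "rho y'' y = iv n"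
    using rhoB[OF cH(2) ivH[of n] _ x y refl] n NH by blast
  have "D A B x y = D A B x y''"
    using D2[OF B y y''(1)] E_sym[OF y''(1) y] y'' Niv n by auto
  also have "\<dots> = D A B x' y'" using D1[OF QC_H[OF A] QC_H[OF B] x y''(1) x' y'] y'' by auto
  finally show ?thesis .
qed

definition K where "K = card (cls (SOME x. x \<in> X))"

lemma cls_card: assumes x: "x \<in> X" shows "card (cls x) = K"
proof -
  have "\<And>x. x \<in> X \<Longrightarrow> cls x = {w\<in>X. rho x w \<in> N \<and> rho w x \<in> N}"
  proof -
    fix x assume x: "x \<in> X"
    show "cls x = {w\<in>X. rho x w \<in> N \<and> rho w x \<in> N}"
      unfolding cls_def using E_sym[OF x] by auto
  qed
  then have 1: "\<And>x. x \<in> X \<Longrightarrow> card (cls x) = D N N x x" unfolding D_def by simp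
  have s: "(SOME x. x \<in> X) \<in> X" using Xne some_in_eq by blast
  show ?thesis unfolding K_def using 1[OF x] 1[OF s] D1[OF NH NH x x s s] rho_xx x s by auto
qed

lemma K_pos: "K > 0"
proof -
  obtain x where "x \<in> X" using Xne by auto
  then have "cls x \<noteq> {}" using cls_self by auto
  then have "card (cls x) > 0" using cls_fin card_gt_0_iff by blast
  then show ?thesis using cls_card \<open>x \<in> X\<close> by simp
qed

lemma Dk: assumes A: "A \<in> QC" and B: "B \<in> QC" and u: "u \<in> X" and v: "v \<in> X"
  shows "D A B u v = K * D' A B u v"
proof -
  let ?P = "\<lambda>w. rho u w \<in> A \<and> rho w v \<in> B"
  have inv: "\<And>w w'. w \<in> X \<Longrightarrow> w' \<in> X \<Longrightarrow> ?P w \<Longrightarrow> rho w w' \<in> N \<Longrightarrow> ?P w'"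
  proof -
    fix w w' assume w: "w \<in> X" "w' \<in> X" "?P w" "rho w w' \<in> N"
    have "rho u w' \<in> A" using W1[OF A u w(1) w(2)] w by auto
    moreover have "rho w' v \<in> B" using W2[OF B w(1) v w(2)] w E_sym[OF w(1) w(2)] by auto
    ultimately show "?P w'" by auto
  qed
  have eq: "{w\<in>X. ?P w} = (\<Union>w'\<in>{w\<in>X'. ?P w}. cls w')"
  proof (rule set_eqI, rule iffI)
    fix w assume w: "w \<in> {w\<in>X. ?P w}"
    have "rep w \<in> X'" using w unfolding X'_def by auto
    moreover have "?P (rep w)" using inv[of w "rep w"] w rep_X rep_E by auto
    moreover have "w \<in> cls (rep w)" using w rep_E' unfolding cls_def by auto
    ultimately
    show "w \<in> (\<Union>w'\<in>{w\<in>X'. ?P w}. cls w')" by blast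
  next
    fix w assume "w \<in> (\<Union>w'\<in>{w\<in>X'. ?P w}. cls w')"
    then obtain w' where "w' \<in> X'" "?P w'" "w \<in> X" "rho w' w \<in> N" unfolding cls_def by auto
    then show "w \<in> {w\<in>X. ?P w}" using inv[of w' w] X'_sub by blast
  qed
  have disj: "\<And>w1 w2. w1 \<in> X' \<Longrightarrow> w2 \<in> X' \<Longrightarrow> w1 \<noteq> w2 \<Longrightarrow> cls w1 \<inter> cls w2 = {}"
  proof -
    fix w1 w2 assume w: "w1 \<in> X'" "w2 \<in> X'" "w1 \<noteq> w2"
    show "cls w1 \<inter> cls w2 = {}"
    proof (rule ccontr)
      assume "cls w1 \<inter> cls w2 \<noteq> {}"
      then obtain z where z: "z \<in> X" "rho w1 z \<in> N" "rho w2 z \<in> N" unfolding cls_def by auto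
      have "rho w1 w2 \<in> N" using E_trans[OF _ z(1) _ z(2) E_sym[OF _ z(1) z(3)]] w X'_sub by auto
      then show False using X'_E w by auto
    qed
  qed
  have finX': "finite X'" using X'_sub finX finite_subset by blast
  have "D A B u v = card (\<Union>w'\<in>{w\<in>X'. ?P w}. cls w')" unfolding D_def using eq by simp
  also have "\<dots> = (\<Sum>w'\<in>{w\<in>X'. ?P w}. card (cls w'))"
    by (rule card_UN_disjoint) (use finX' cls_fin disj in auto)
  also have "\<dots> = (\<Sum>w'\<in>{w\<in>X'. ?P w}. K)"
    by (rule sum.cong[OF refl]) (use cls_card X'_sub in auto)
  also have "\<dots> = K * D' A B u v" unfolding D'_def by simp
  finally show ?thesis .
qed

lemma D'_const: assumes A: "A \<in> QC" and B: "B \<in> QC" and C: "C \<in> QC"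
  and x: "x \<in> X" and y: "y \<in> X" and x': "x' \<in> X" and y': "y' \<in> X"
  and c: "rho x y \<in> C" and c': "rho x' y' \<in> C"
  shows "D' A B x y = D' A B x' y'"
  using D3[OF A B C x y x' y' c c'] Dk[OF A B x y] Dk[OF A B x' y'] K_pos by auto

lemma g_set: "u \<in> X' \<Longrightarrow> v \<in> X' \<Longrightarrow>
   {w. (u, w) \<in> g A} \<inter> {w. (v, w) \<in> converse (g B)} = {w\<in>X'. rho u w \<in> A \<and> rho w v \<in> B}"
  unfolding g_def by auto

lemma X'_ne: "X' \<noteq> {}" using Xne X'_def by auto
lemma X'_fin: "finite X'" using X'_sub finX finite_subset by blast

lemma g_ne: assumes A: "A \<in> QC" shows "\<exists>u v. (u,v) \<in> g A"
proof -
  obtain h where h: "h \<in> H" "A = sm {h} N" using QC_D A by blast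
  obtain x y where xy: "x \<in> X" "y \<in> X" "rho x y = h" using pair_ex h by blast
  have "rho x y \<in> A" using in_coset h xy by auto
  then have "rho (rep x) y \<in> A" using W2[OF A xy(1,2) rep_X[OF xy(1)]] rep_E' xy by auto
  then have "rho (rep x) (rep y) \<in> A" using W1[OF A rep_X[OF xy(1)] xy(2) rep_X[OF xy(2)]] rep_E xy by auto
  then show ?thesis unfolding g_def X'_def using xy by blast
qed

lemma g_sub: "g A \<subseteq> X' \<times> X'" unfolding g_def by auto

lemma g_inj: assumes A: "A \<in> QC" and B: "B \<in> QC" and u: "(u,v) \<in> g A" "(u,v) \<in> g B"
  shows "A = B"
proof -
  have "rho u v \<in> A" "rho u v \<in> B" using u unfolding g_def by auto
  then have "A = sm {rho u v} N" "B = sm {rho u v} N" using QC_of[OF A] QC_of[OF B] by blast+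
  then show ?thesis by simp
qed

lemma ivcos: assumes a: "a \<in> H" and x: "x \<in> sm {a} N" shows "iv x \<in> sm {iv a} N"
proof -
  obtain n where n: "n \<in> N" "x \<in> m a n" using x by (auto simp: sm_mem)
  then have "iv x \<in> m (iv n) (iv a)" using iv_anti a NH by auto
  then have "iv x \<in> sm N {iv a}" using Niv n by (auto simp: sm_mem)
  then show ?thesis using Nnorm ivH a by auto
qed

lemma ivcos_iff: assumes a: "a \<in> H" and x: "x \<in> H" shows "iv x \<in> sm {iv a} N \<longleftrightarrow> x \<in> sm {a} N"
proof
  assume "iv x \<in> sm {iv a} N"
  then have "iv (iv x) \<in> sm {iv (iv a)} N" by (rule ivcos[OF ivH[OF a]])
  then show "x \<in> sm {a} N" using iviv a x by simp
next
  assume "x \<in> sm {a} N"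
  then show "iv x \<in> sm {iv a} N" by (rule ivcos[OF a])
qed

lemma sch': "assoc_scheme X' S'"
  unfolding assoc_scheme_def
proof (intro conjI)
  show "{} \<notin> S'" using g_ne unfolding S'_def by fastforce
  show "\<Union> S' = X' \<times> X'"
  proof
    show "\<Union> S' \<subseteq> X' \<times> X'" unfolding S'_def using g_sub by auto
    show "X' \<times> X' \<subseteq> \<Union> S'"
    proof
      fix p assume p: "p \<in> X' \<times> X'"
      then obtain u v where uv: "p = (u,v)" "u \<in> X'" "v \<in> X'" by auto
      then have "rho u v \<in> H" using rho X'_sub by auto
      then have "sm {rho u v} N \<in> QC" "(u,v) \<in> g (sm {rho u v} N)"
        using QC_I in_coset uv unfolding g_def by auto
      then show "p \<in> \<Union> S'" unfolding S'_def using uv by auto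
    qed
  qed
  show "\<forall>p\<in>S'. \<forall>q\<in>S'. p \<noteq> q \<longrightarrow> p \<inter> q = {}"
  proof (intro ballI impI)
    fix p q assume p: "p \<in> S'" and q: "q \<in> S'" and pq: "p \<noteq> q"
    obtain A B where AB: "A \<in> QC" "B \<in> QC" "p = g A" "q = g B" using p q unfolding S'_def by blast
    show "p \<inter> q = {}"
    proof (rule ccontr)
      assume "p \<inter> q \<noteq> {}"
      then obtain u v where "(u,v) \<in> g A" "(u,v) \<in> g B" using AB by auto
      then have "A = B" using g_inj[OF AB(1,2)] by blast
      then show False using pq AB by simp
    qed
  qed
  show "Id_on X' \<in> S'"
  proof -
    have "g N = Id_on X'" unfolding g_def Id_on_def using X'_E E_refl X'_sub by auto
    then show ?thesis unfolding S'_def using N_QC by auto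
  qed
  show "\<forall>p\<in>S'. converse p \<in> S'"
  proof
    fix p assume "p \<in> S'"
    then obtain A where A: "A \<in> QC" "p = g A" unfolding S'_def by auto
    then obtain a where a: "a \<in> H" "A = sm {a} N" using QC_D by blast
    have "converse p = g (sm {iv a} N)"
    proof (rule set_eqI)
      fix z
      obtain v u :: nat where z: "z = (v,u)" by fastforce
      have "(v,u) \<in> converse p \<longleftrightarrow> (v,u) \<in> g (sm {iv a} N)"
      proof (cases "u \<in> X' \<and> v \<in> X'")
        case True
        then have uv: "u \<in> X" "v \<in> X" using X'_sub by auto
        have "rho v u = iv (rho u v)" using rho_sym[OF uv] .
        moreover have "iv (rho u v) \<in> sm {iv a} N \<longleftrightarrow> rho u v \<in> sm {a} N"
          using ivcos_iff[OF a(1)] rho[OF uv] by blast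
        ultimately show ?thesis unfolding A(2) a(2) g_def using True by simp
      next
        case False
        then show ?thesis unfolding A(2) g_def by auto
      qed
      then show "z \<in> converse p \<longleftrightarrow> z \<in> g (sm {iv a} N)" using z by simp
    qed
    then show "converse p \<in> S'" unfolding S'_def using QC_I ivH a by auto
  qed
  show "\<forall>p\<in>S'. \<forall>q\<in>S'. \<forall>r\<in>S'. \<exists>a::nat. \<forall>y\<in>X'. \<forall>z. (y, z) \<in> r \<longrightarrow>
         card ({w. (y, w) \<in> p} \<inter> {w. (z, w) \<in> converse q}) = a"
  proof (intro ballI)
    fix p q r assume "p \<in> S'" "q \<in> S'" "r \<in> S'"
    then obtain A B C where ABC: "A \<in> QC" "B \<in> QC" "C \<in> QC" "p = g A" "q = g B" "r = g C"
      unfolding S'_def by auto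
    obtain u0 v0 where uv0: "(u0,v0) \<in> g C" using g_ne ABC by blast
    show "\<exists>a::nat. \<forall>y\<in>X'. \<forall>z. (y, z) \<in> r \<longrightarrow>
         card ({w. (y, w) \<in> p} \<inter> {w. (z, w) \<in> converse q}) = a"
    proof (intro exI ballI allI impI)
      fix y z assume y: "y \<in> X'" and yz: "(y,z) \<in> r"
      have z: "z \<in> X'" "rho y z \<in> C" using yz ABC unfolding g_def by auto
      have 0: "u0 \<in> X'" "v0 \<in> X'" "rho u0 v0 \<in> C" using uv0 unfolding g_def by auto
      show "card ({w. (y, w) \<in> p} \<inter> {w. (z, w) \<in> converse q}) = D' A B u0 v0"
        unfolding ABC g_set[OF y z(1)] D'_def[symmetric]
        by (rule D'_const[OF ABC(1-3)]) (use X'_sub y z 0 in auto)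
    qed
  qed
qed

lemma int_g: assumes A: "A \<in> QC" and B: "B \<in> QC" and C: "C \<in> QC" and uv: "(u,v) \<in> g C"
  shows "int_number X' (g A) (g B) (g C) = D' A B u v"
proof -
  have gs: "g A \<in> S'" "g B \<in> S'" "g C \<in> S'" using A B C unfolding S'_def by blast+
  have c: "\<forall>p\<in>S'. \<forall>q\<in>S'. \<forall>r\<in>S'. \<exists>a::nat. \<forall>y\<in>X'. \<forall>z. (y, z) \<in> r \<longrightarrow>
         card ({w. (y, w) \<in> p} \<inter> {w. (z, w) \<in> converse q}) = a"
    using sch' unfolding assoc_scheme_def by (elim conjE) assumption
  obtain a where a: "\<forall>y\<in>X'. \<forall>z. (y, z) \<in> g C \<longrightarrow>
         card ({w. (y, w) \<in> g A} \<inter> {w. (z, w) \<in> converse (g B)}) = a"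
    using bspec[OF bspec[OF bspec[OF c gs(1)] gs(2)] gs(3)] by (elim exE)
  have uv': "u \<in> X'" "v \<in> X'" using uv unfolding g_def by blast+
  show ?thesis unfolding int_number_gen[OF a uv'(1) uv] g_set[OF uv'] D'_def ..
qed

lemma D'_pos: assumes A: "A \<in> QC" and B: "B \<in> QC" and u: "u \<in> X'" and v: "v \<in> X'"
  shows "D' A B u v \<ge> 1 \<longleftrightarrow> rho u v \<in> sm A B"
proof
  assume "D' A B u v \<ge> 1"
  then obtain w where w: "w \<in> X'" "rho u w \<in> A" "rho w v \<in> B" unfolding D'_def
    by (metis (no_types, lifting) card.empty empty_Collect_eq not_one_le_zero)
  have "rho u v \<in> m (rho u w) (rho w v)" using rhoA X'_sub u v w(1) by blast
  then show "rho u v \<in> sm A B" using w unfolding set_mult_def by blast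
next
  assume "rho u v \<in> sm A B"
  then obtain a b where ab: "a \<in> A" "b \<in> B" "rho u v \<in> m a b" by (auto simp: sm_mem)
  have uX: "u \<in> X" "v \<in> X" using u v X'_sub by auto
  obtain w where w: "w \<in> X" "rho u w = a" "rho w v = b"
    using rhoB[OF _ _ ab(3) uX refl] ab QC_H A B by blast
  have "rho u (rep w) \<in> A" using W1[OF A uX(1) w(1) rep_X[OF w(1)]] rep_E w ab by auto
  moreover have "rho (rep w) v \<in> B" using W2[OF B w(1) uX(2) rep_X[OF w(1)]] rep_E' w ab by auto
  moreover have "rep w \<in> X'" using w X'_def by auto
  ultimately have "{w\<in>X'. rho u w \<in> A \<and> rho w v \<in> B} \<noteq> {}" by blast
  then show "D' A B u v \<ge> 1" unfolding D'_def using X'_fin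
    by (simp add: Suc_le_eq card_gt_0_iff)
qed

lemma smAB_closed: assumes A: "A \<in> QC" and B: "B \<in> QC" and c: "c \<in> sm A B" and c': "c' \<in> sm {c} N"
  shows "c' \<in> sm A B"
proof -
  obtain b where b: "b \<in> H" "B = sm {b} N" using QC_D B by blast
  have "sm B N \<subseteq> B" using cosetN b by auto
  obtain n where n: "n \<in> N" "c' \<in> m c n" using c' unfolding set_mult_def by blast
  have "c' \<in> sm (sm A B) N" using c n unfolding set_mult_def by blast
  also have "\<dots> = sm A (sm B N)" using sm_assoc QC_H A B NH by auto
  also have "\<dots> \<subseteq> sm A B" using \<open>sm B N \<subseteq> B\<close> sm_mono by blast
  finally show ?thesis .
qed

lemma iso': "hg_iso QC (quot_mult m N) S' (scheme_mult X' S') g"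
  unfolding hg_iso_def
proof (intro conjI ballI)
  show "bij_betw g QC S'" unfolding bij_betw_def S'_def inj_on_def
    using g_ne g_inj by blast
  fix A B assume A: "A \<in> QC" and B: "B \<in> QC"
  show "g ` quot_mult m N A B = scheme_mult X' S' (g A) (g B)"
  proof
    show "g ` quot_mult m N A B \<subseteq> scheme_mult X' S' (g A) (g B)"
    proof
      fix r assume "r \<in> g ` quot_mult m N A B"
      then obtain c where c: "c \<in> sm A B" "r = g (sm {c} N)" unfolding quot_mult_def by auto
      have cH: "c \<in> H" using c smH QC_H A B by blast
      have C: "sm {c} N \<in> QC" using QC_I cH by auto
      obtain u v where uv: "(u,v) \<in> g (sm {c} N)" using g_ne C by blast
      have uv': "u \<in> X'" "v \<in> X'" "rho u v \<in> sm {c} N" using uv g_def by auto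
      have "rho u v \<in> sm A B" using smAB_closed A B c uv' by auto
      then have "int_number X' (g A) (g B) r \<ge> 1"
        using int_g[OF A B C uv] D'_pos[OF A B uv'(1,2)] c by auto
      then show "r \<in> scheme_mult X' S' (g A) (g B)"
        unfolding scheme_mult_def S'_def using c C by auto
    qed
    show "scheme_mult X' S' (g A) (g B) \<subseteq> g ` quot_mult m N A B"
    proof
      fix r assume "r \<in> scheme_mult X' S' (g A) (g B)"
      then obtain C where C: "C \<in> QC" "r = g C" "int_number X' (g A) (g B) (g C) \<ge> 1"
        unfolding scheme_mult_def S'_def by auto
      obtain u v where uv: "(u,v) \<in> g C" using g_ne C by blast
      have uv': "u \<in> X'" "v \<in> X'" "rho u v \<in> C" using uv g_def by auto
      have "rho u v \<in> sm A B" using int_g[OF A B C(1) uv] D'_pos[OF A B uv'(1,2)] C by auto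
      moreover have "C = sm {rho u v} N" using QC_of C uv' by auto
      ultimately show "r \<in> g ` quot_mult m N A B" unfolding quot_mult_def using C by auto
    qed
  qed
qed

end

theorem proposition4p7:
  fixes H :: "'a set" and m :: "'a \<Rightarrow> 'a \<Rightarrow> 'a set" and e :: 'a and iv :: "'a \<Rightarrow> 'a"
    and N :: "'a set"
  assumes "hypergroup H m e iv"
    and "finitely_realizable H m"
    and "normal_sub_hypergroup H m iv N"
  shows "finitely_realizable (quot_carrier H m N) (quot_mult m N)"
proof -
  obtain X :: "nat set" and S f where X: "finite X" "X \<noteq> {}" "assoc_scheme X S"
    "hg_iso H m S (scheme_mult X S) f"
    using assms(2) unfolding finitely_realizable_def by blast
  interpret QS H m e iv N X S f
    using assms(1,3) X by unfold_locales auto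
  show ?thesis unfolding finitely_realizable_def
    using X'_fin X'_ne sch' iso'[unfolded QC_def] by blast
qed

end
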